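(* Let $\delta\in(0,1)$. The meta-algorithm described in the context, with the commitment subroutine \textsc{CommitUnknown} (parameter $\delta$), guarantees, with probability at least $1-\delta/3$, \[ R(\ell^\star)\le 1+20\ln T\,\ln(T/\delta). \]
   Context: Robust dynamic pricing: there are $T$ rounds and an unknown valuation $v^\star\in[0,1)$. At each round $t$ the seller posts a price $p_t\in[0,1]$. The true sale indicator is $y_t=\mathbbm 1\{p_t\le v^\star\}$; the seller observes $\sigma_t\in\{0,1\}$, which differs from $y_t$ in at most $C$ rounds. The adversary decides whether to corrupt round $t$ based on the history and on the seller's distribution over $p_t$, but not on the realized $p_t$. Meta-algorithm: let $D=\lceil\log_2 T\rceil$. Consider the complete binary tree of intervals of depth $D$ with root $[0,1)$, where each non-leaf node $[L,R)$ has children $[L,M)$ and $[M,R)$, $M=(L+R)/2$; the depth-$D$ nodes are the leaves (each of length at most $1/T$), and $\ell^\star$ is the unique leaf containing $v^\star$. The algorithm keeps a current node $I$, initially the root, and repeats until the horizon ends: if $I=[L,R)$ is not a leaf, it performs a safety check — post $L$ and observe $\sigma_L$, post $R$ and observe $\sigma_R$; the check fails if $\sigma_L=0$ or $\sigma_R=1$ (by convention the query at $L=0$ and the query at $R=1$ always count as passing). On failure $I$ becomes its parent; otherwise it posts $M$, observes $\sigma_M$, and $I$ becomes $[M,R)$ if $\sigma_M=1$ and $[L,M)$ if $\sigma_M=0$. If $I$ is a leaf, the commitment subroutine is run on $I$; if it returns FAIL, $I$ becomes its parent. \textsc{CommitUnknown} with parameter $\delta$: each leaf $\ell$ has a counter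 $s_\ell$, initialized to $0$ at the start of the horizon and never reset. On leaf $\ell=[L,R)$ it repeats the following two-round block: post $L$ and observe $\sigma_L$; if $\sigma_L=0$ return FAIL. Increase $s_\ell$ by $1$ and sample, independently of everything else, $B\sim\mathrm{Bernoulli}(\min\{4\ln(T/\delta)/s_\ell,1\})$. If $B=0$, post $L$ and observe $\sigma_L$, returning FAIL if $\sigma_L=0$; if $B=1$, post $R$ and observe $\sigma_R$, returning FAIL if $\sigma_R=1$. For a leaf $\ell$, $Q(\ell)$ is the set of rounds during which the commitment subroutine runs on $\ell$, and $R(\ell)=\sum_{t\in Q(\ell)}(v^\star-p_t\mathbbm 1\{p_t\le v^\star\})$. *)

theory Defs
  imports "HOL-Probability.Probability"
begin

text \<open>Nodes of the complete binary tree of depth D are pairs (d,k) with d \<le> D and k < 2^d,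
  standing for the interval [k/2^d, (k+1)/2^d).  The root is (0,0).\<close>

definition depthD :: "nat \<Rightarrow> nat" where
  "depthD T = nat \<lceil>log 2 (real T)\<rceil>"

definition nodeL :: "nat \<times> nat \<Rightarrow> real" where
  "nodeL n = real (snd n) / 2 ^ fst n"

definition nodeR :: "nat \<times> nat \<Rightarrow> real" where
  "nodeR n = (real (snd n) + 1) / 2 ^ fst n"

definition nodeM :: "nat \<times> nat \<Rightarrow> real" where
  "nodeM n = (nodeL n + nodeR n) / 2"

definition parent :: "nat \<times> nat \<Rightarrow> nat \<times> nat" where
  "parent n = (fst n - 1, snd n div 2)"

definition child :: "nat \<times> nat \<Rightarrow> bool \<Rightarrow> nat \<times> nat" where
  "child n b = (Suc (fst n), 2 * snd n + (if b then 1 else 0))"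

definition is_leaf :: "nat \<Rightarrow> nat \<times> nat \<Rightarrow> bool" where
  "is_leaf T n \<longleftrightarrow> fst n = depthD T"

definition leaf_of :: "nat \<Rightarrow> real \<Rightarrow> nat \<times> nat" where
  "leaf_of T v = (depthD T, nat \<lfloor>v * 2 ^ depthD T\<rfloor>)"

text \<open>Phases of the algorithm (what it is about to post in the next round):
  SafeL: first query (at L) of the safety check;
  SafeR b: second query (at R) of the safety check, b = whether the query at L passed;
  Mid: query at the midpoint M;
  ComFirst: first round of a CommitUnknown block (post L);
  ComSecond: second round of a CommitUnknown block (post R w.p. q, L otherwise).\<close>
datatype phase = SafeL | SafeR bool | Mid | ComFirst | ComSecond

datatype state = St (node: "nat \<times> nat") (ph: phase) (cnt: "nat \<Rightarrow> nat")

definition start_phase :: "nat \<Rightarrow> nat \<times> nat \<Rightarrow> phase" where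
  "start_phase T n = (if is_leaf T n then ComFirst else SafeL)"

definition goto :: "nat \<Rightarrow> nat \<times> nat \<Rightarrow> (nat \<Rightarrow> nat) \<Rightarrow> state" where
  "goto T n c = St n (start_phase T n) c"

definition init_state :: "nat \<Rightarrow> state" where
  "init_state T = goto T (0, 0) (\<lambda>_. 0)"

definition commit_prob :: "nat \<Rightarrow> real \<Rightarrow> nat \<Rightarrow> real" where
  "commit_prob T \<delta> s = min (4 * ln (real T / \<delta>) / real s) 1"

text \<open>The seller's distribution over the price posted in the next round.
  Counters are indexed by the index k of the leaf (D,k).\<close>
definition price_dist :: "nat \<Rightarrow> real \<Rightarrow> state \<Rightarrow> real pmf" where
  "price_dist T \<delta> st = (case ph st of
      SafeL \<Rightarrow> return_pmf (nodeL (node st))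
    | SafeR _ \<Rightarrow> return_pmf (nodeR (node st))
    | Mid \<Rightarrow> return_pmf (nodeM (node st))
    | ComFirst \<Rightarrow> return_pmf (nodeL (node st))
    | ComSecond \<Rightarrow> map_pmf (\<lambda>B. if B then nodeR (node st) else nodeL (node st))
                     (bernoulli_pmf (commit_prob T \<delta> (cnt st (snd (node st))))))"

text \<open>Deterministic update of the algorithm's state after posting price p and observing \<sigma>.
  Checks at L = 0 and at R = 1 always pass (safety check convention).\<close>
definition step :: "nat \<Rightarrow> state \<Rightarrow> real \<Rightarrow> bool \<Rightarrow> state" where
  "step T st p \<sigma> = (let n = node st; c = cnt st in
     case ph st of
       SafeL \<Rightarrow> St n (SafeR (nodeL n = 0 \<or> \<sigma>)) c
     | SafeR okL \<Rightarrow>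
         (if okL \<and> (nodeR n = 1 \<or> \<not> \<sigma>) then St n Mid c else goto T (parent n) c)
     | Mid \<Rightarrow> goto T (child n \<sigma>) c
     | ComFirst \<Rightarrow>
         (if \<not> \<sigma> then goto T (parent n) c
          else St n ComSecond (c(snd n := Suc (c (snd n)))))
     | ComSecond \<Rightarrow>
         (if p = nodeL n then (if \<not> \<sigma> then goto T (parent n) c else St n ComFirst c)
          else (if \<sigma> then goto T (parent n) c else St n ComFirst c)))"

text \<open>Histories are lists of (posted price, observed feedback).\<close>
type_synonym history = "(real \<times> bool) list"

definition alg_state :: "nat \<Rightarrow> history \<Rightarrow> state" where
  "alg_state T h = fold (\<lambda>(p, \<sigma>) st. step T st p \<sigma>) h (init_state T)"

definition ncorr :: "real \<Rightarrow> history \<Rightarrow> nat" where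
  "ncorr v h = length (filter (\<lambda>(p, \<sigma>). \<sigma> \<noteq> (p \<le> v)) h)"

text \<open>An adversary maps the history and the seller's distribution over the current price
  to the decision whether to corrupt the current round (it does not see the realised price).\<close>
type_synonym adversary = "history \<Rightarrow> real pmf \<Rightarrow> bool"

fun hist_pmf :: "nat \<Rightarrow> real \<Rightarrow> real \<Rightarrow> nat \<Rightarrow> adversary \<Rightarrow> nat \<Rightarrow> history pmf" where
  "hist_pmf T \<delta> v C adv 0 = return_pmf []"
| "hist_pmf T \<delta> v C adv (Suc t) =
     bind_pmf (hist_pmf T \<delta> v C adv t) (\<lambda>h.
       let P = price_dist T \<delta> (alg_state T h);
           corrupt = (adv h P \<and> ncorr v h < C)
       in map_pmf (\<lambda>p. h @ [(p, (p \<le> v) \<noteq> corrupt)]) P)"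

text \<open>R(leaf): regret accumulated in the rounds during which the commitment subroutine
  runs on the given leaf.\<close>
definition in_commit :: "state \<Rightarrow> nat \<times> nat \<Rightarrow> bool" where
  "in_commit st l \<longleftrightarrow> node st = l \<and> (ph st = ComFirst \<or> ph st = ComSecond)"

definition leaf_regret :: "nat \<Rightarrow> real \<Rightarrow> nat \<times> nat \<Rightarrow> history \<Rightarrow> real" where
  "leaf_regret T v l h =
     (\<Sum>t<length h. if in_commit (alg_state T (take t h)) l
                     then v - (if fst (h ! t) \<le> v then fst (h ! t) else 0) else 0)"

end

theory Submission
  imports Defs "HOL-Analysis.Harmonic_Numbers"
begin

definition isR :: "nat \<Rightarrow> real \<Rightarrow> state \<Rightarrow> real \<Rightarrow> bool" where
  "isR T v st p \<longleftrightarrow> ph st = ComSecond \<and> node st = leaf_of T v \<and> p \<noteq> nodeL (leaf_of T v)"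

definition NR :: "nat \<Rightarrow> real \<Rightarrow> history \<Rightarrow> nat" where
  "NR T v h = (\<Sum>i<length h. if isR T v (alg_state T (take i h)) (fst (h ! i)) then 1 else 0)"

definition pend :: "nat \<Rightarrow> real \<Rightarrow> state \<Rightarrow> bool" where
  "pend T v st \<longleftrightarrow> ph st = ComSecond \<and> node st = leaf_of T v"

definition sp :: "nat \<Rightarrow> real \<Rightarrow> state \<Rightarrow> nat" where
  "sp T v st = cnt st (snd (leaf_of T v)) - (if pend T v st then 1 else 0)"

definition GG :: "nat \<Rightarrow> real \<Rightarrow> nat \<Rightarrow> real" where
  "GG T \<delta> s = (\<Prod>j\<in>{1..s}. 1 + commit_prob T \<delta> j)"

definition inv :: "nat \<Rightarrow> state \<Rightarrow> bool" where
  "inv T st \<longleftrightarrow> ((ph st = ComFirst \<or> ph st = ComSecond) \<longrightarrow> fst (node st) = depthD T)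
     \<and> (ph st = ComSecond \<longrightarrow> cnt st (snd (node st)) \<ge> 1)"

lemma alg_state_snoc: "alg_state T (h @ [(p, \<sigma>)]) = step T (alg_state T h) p \<sigma>"
  by (simp add: alg_state_def)

lemma alg_state_Nil: "alg_state T [] = init_state T"
  by (simp add: alg_state_def)

lemma NR_snoc: "NR T v (h @ [x]) = NR T v h + (if isR T v (alg_state T h) (fst x) then 1 else 0)"
proof -
  have "NR T v (h @ [x]) = (\<Sum>i<Suc (length h). if isR T v (alg_state T (take i (h @ [x]))) (fst ((h @ [x]) ! i)) then 1 else 0)"
    by (simp add: NR_def)
  also have "\<dots> = (\<Sum>i<length h. if isR T v (alg_state T (take i (h @ [x]))) (fst ((h @ [x]) ! i)) then 1 else 0)
      + (if isR T v (alg_state T h) (fst x) then 1 else 0)"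
    by (simp add: nth_append)
  also have "(\<Sum>i<length h. if isR T v (alg_state T (take i (h @ [x]))) (fst ((h @ [x]) ! i)) then 1 else 0) = NR T v h"
    unfolding NR_def by (intro sum.cong) (auto simp: nth_append)
  finally show ?thesis .
qed

lemma inv_step: "inv T st \<Longrightarrow> inv T (step T st p \<sigma>)"
  by (cases "ph st") (auto simp: inv_def step_def goto_def start_phase_def is_leaf_def Let_def)

lemma inv_init: "inv T (init_state T)"
  by (auto simp: inv_def init_state_def goto_def start_phase_def is_leaf_def)

lemma inv_alg: "inv T (alg_state T h)"
proof (induction h rule: rev_induct)
  case Nil then show ?case by (simp add: alg_state_Nil inv_init)
next
  case (snoc x xs) then show ?case by (cases x) (simp add: alg_state_snoc inv_step)
qed

lemma cnt_step: "cnt (step T st p \<sigma>) j \<le> Suc (cnt st j)"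
  by (cases "ph st") (auto simp: step_def goto_def Let_def)

lemma cnt_alg: "cnt (alg_state T h) j \<le> length h"
proof (induction h rule: rev_induct)
  case Nil then show ?case by (simp add: alg_state_Nil init_state_def goto_def)
next
  case (snoc x xs) then show ?case
    using cnt_step[of T "alg_state T xs" "fst x" "snd x" j]
    by (cases x) (simp add: alg_state_snoc)
qed


lemma cp_nonneg: assumes "T \<ge> 1" "0 < \<delta>" "\<delta> < 1" shows "0 \<le> commit_prob T \<delta> s"
proof -
  have "real T / \<delta> \<ge> 1" using assms by (simp add: field_simps)
  then have "ln (real T / \<delta>) \<ge> 0" by simp
  then show ?thesis by (simp add: commit_prob_def)
qed

lemma cp_le1: "commit_prob T \<delta> s \<le> 1"
  by (simp add: commit_prob_def)

lemma GG_Suc: "GG T \<delta> (Suc s) = GG T \<delta> s * (1 + commit_prob T \<delta> (Suc s))"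
  by (simp add: GG_def prod.cl_ivl_Suc mult.commute)

lemma GG_pos: assumes "T \<ge> 1" "0 < \<delta>" "\<delta> < 1" shows "GG T \<delta> s > 0"
  unfolding GG_def using cp_nonneg[OF assms] by (intro prod_pos) (smt (verit))

lemma GG_mono: assumes "T \<ge> 1" "0 < \<delta>" "\<delta> < 1" "s \<le> s'" shows "GG T \<delta> s \<le> GG T \<delta> s'"
  using assms(4)
proof (induction s' rule: dec_induct)
  case base then show ?case by simp
next
  case (step n)
  have "GG T \<delta> n \<le> GG T \<delta> n * (1 + commit_prob T \<delta> (Suc n))"
    using GG_pos[OF assms(1-3), of n] cp_nonneg[OF assms(1-3), of "Suc n"] by simp
  then show ?case using step GG_Suc by simp
qed

lemma sp_step_second: "ph st = ComSecond \<Longrightarrow> sp T v (step T st p \<sigma>) = cnt st (snd (leaf_of T v))"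
  by (auto simp: sp_def pend_def step_def goto_def start_phase_def Let_def)

lemma sp_step_first: "ph st = ComFirst \<Longrightarrow> node st = leaf_of T v \<Longrightarrow> sp T v (step T st p \<sigma>) = sp T v st"
  by (auto simp: sp_def pend_def step_def goto_def start_phase_def Let_def)

lemma sp_step_other:
  assumes "inv T st" "\<not> pend T v st" "\<not> (ph st = ComFirst \<and> node st = leaf_of T v)"
  shows "sp T v (step T st p \<sigma>) = sp T v st"
proof (cases "ph st")
  case ComFirst
  then have "fst (node st) = depthD T" "node st \<noteq> leaf_of T v" using assms by (auto simp: inv_def)
  then have "snd (node st) \<noteq> snd (leaf_of T v)" by (auto simp: leaf_of_def prod_eq_iff)
  then show ?thesis using ComFirst assms
    by (auto simp: sp_def pend_def step_def goto_def start_phase_def Let_def)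
qed (use assms in \<open>auto simp: sp_def pend_def step_def goto_def start_phase_def Let_def\<close>)


lemma nodeL_neq_R: "nodeL n \<noteq> nodeR n"
  by (simp add: nodeL_def nodeR_def divide_simps)

lemma one_step:
  assumes T: "T \<ge> 1" "0 < \<delta>" "\<delta> < 1" and I: "inv T st"
  shows "(\<integral>\<^sup>+p. ennreal ((if isR T v st p then 2 else 1) / GG T \<delta> (sp T v (step T st p (\<sigma> p))))
            \<partial>measure_pmf (price_dist T \<delta> st)) = ennreal (1 / GG T \<delta> (sp T v st))"
proof -
  let ?l = "leaf_of T v"
  consider (P) "pend T v st" | (F) "ph st = ComFirst \<and> node st = ?l"
    | (O) "\<not> pend T v st" "\<not> (ph st = ComFirst \<and> node st = ?l)" by blast
  then show ?thesis
  proof cases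
    case P
    then have ph: "ph st = ComSecond" and nd: "node st = ?l" by (auto simp: pend_def)
    define s where "s = cnt st (snd ?l)"
    have s1: "s \<ge> 1" using I ph nd by (auto simp: inv_def s_def)
    define q where "q = commit_prob T \<delta> s"
    have q0: "0 \<le> q" "q \<le> 1" using cp_nonneg[OF T] cp_le1 by (auto simp: q_def)
    have spst: "sp T v st = s - 1" using P by (simp add: sp_def s_def)
    have sps: "\<And>p. sp T v (step T st p (\<sigma> p)) = s" using sp_step_second[OF ph] s_def by simp
    have pd: "price_dist T \<delta> st = map_pmf (\<lambda>B. if B then nodeR ?l else nodeL ?l) (bernoulli_pmf q)"
      by (simp add: price_dist_def q_def s_def ph, simp only: nd)
    have isRR: "isR T v st (nodeR ?l)" using ph nd nodeL_neq_R[of ?l] by (simp add: isR_def eq_commute)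
    have isRL: "\<not> isR T v st (nodeL ?l)" by (auto simp: isR_def)
    have Gs: "GG T \<delta> s = GG T \<delta> (s - 1) * (1 + q)"
      using GG_Suc[of T \<delta> "s - 1"] s1 by (simp add: q_def)
    have Gp: "GG T \<delta> (s - 1) > 0" using GG_pos[OF T] by blast
    have "(\<integral>\<^sup>+p. ennreal ((if isR T v st p then 2 else 1) / GG T \<delta> (sp T v (step T st p (\<sigma> p))))
            \<partial>measure_pmf (price_dist T \<delta> st))
        = ennreal (2 / GG T \<delta> s) * ennreal q + ennreal (1 / GG T \<delta> s) * ennreal (1 - q)"
      unfolding pd using q0 by (simp add: sps isRR isRL)
    also have "\<dots> = ennreal (2 / GG T \<delta> s * q + 1 / GG T \<delta> s * (1 - q))"
    proof -
      have G: "GG T \<delta> s > 0" using GG_pos[OF T] by blast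
      have "ennreal (2 / GG T \<delta> s * q + 1 / GG T \<delta> s * (1 - q))
          = ennreal (2 / GG T \<delta> s * q) + ennreal (1 / GG T \<delta> s * (1 - q))"
        using G q0 by (intro ennreal_plus) auto
      also have "\<dots> = ennreal (2 / GG T \<delta> s) * ennreal q + ennreal (1 / GG T \<delta> s) * ennreal (1 - q)"
        using G q0 by (simp only: ennreal_mult[symmetric] divide_nonneg_pos zero_le_numeral zero_le_one diff_ge_0_iff_ge)
      finally show ?thesis by simp
    qed
    also have "2 / GG T \<delta> s * q + 1 / GG T \<delta> s * (1 - q) = 1 / GG T \<delta> (sp T v st)"
    proof -
      have pos: "GG T \<delta> (s - 1) * (1 + q) > 0" using Gp q0 by simp
      have "2 / GG T \<delta> s * q + 1 / GG T \<delta> s * (1 - q) = (1 + q) / (GG T \<delta> (s - 1) * (1 + q))"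
        unfolding Gs using pos by (simp add: divide_simps)
      also have "\<dots> = 1 / GG T \<delta> (s - 1)" using pos q0 by simp
      finally show ?thesis by (simp add: spst)
    qed
    finally show ?thesis .
  next
    case F
    then have pd: "price_dist T \<delta> st = return_pmf (nodeL ?l)" by (simp add: price_dist_def)
    have isRL: "\<not> isR T v st (nodeL ?l)" by (auto simp: isR_def)
    show ?thesis unfolding pd using F isRL GG_pos[OF T]
      by (simp add: sp_step_first)
  next
    case O
    have "\<And>p. \<not> isR T v st p" using O by (auto simp: isR_def pend_def)
    moreover have "\<And>p. sp T v (step T st p (\<sigma> p)) = sp T v st" using sp_step_other[OF I O] by blast
    ultimately show ?thesis by (simp add: measure_pmf.emeasure_space_1)
  qed
qed


definition ZZ :: "nat \<Rightarrow> real \<Rightarrow> real \<Rightarrow> history \<Rightarrow> ennreal" where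
  "ZZ T \<delta> v h = ennreal (2 ^ NR T v h / GG T \<delta> (sp T v (alg_state T h)))"

lemma ZZ_step:
  assumes T: "T \<ge> 1" "0 < \<delta>" "\<delta> < 1"
  shows "(\<integral>\<^sup>+p. ZZ T \<delta> v (h @ [(p, \<sigma> p)]) \<partial>measure_pmf (price_dist T \<delta> (alg_state T h))) = ZZ T \<delta> v h"
proof -
  let ?st = "alg_state T h"
  have "\<And>p. ZZ T \<delta> v (h @ [(p, \<sigma> p)]) = ennreal (2 ^ NR T v h) *
      ennreal ((if isR T v ?st p then 2 else 1) / GG T \<delta> (sp T v (step T ?st p (\<sigma> p))))"
    unfolding ZZ_def NR_snoc alg_state_snoc
    by (subst ennreal_mult[symmetric]) (auto simp: GG_pos[OF T, THEN less_imp_le] power_add)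
  then have "(\<integral>\<^sup>+p. ZZ T \<delta> v (h @ [(p, \<sigma> p)]) \<partial>measure_pmf (price_dist T \<delta> ?st))
     = ennreal (2 ^ NR T v h) * (\<integral>\<^sup>+p.
      ennreal ((if isR T v ?st p then 2 else 1) / GG T \<delta> (sp T v (step T ?st p (\<sigma> p)))) \<partial>measure_pmf (price_dist T \<delta> ?st))"
    by (simp add: nn_integral_cmult)
  also have "\<dots> = ennreal (2 ^ NR T v h) * ennreal (1 / GG T \<delta> (sp T v ?st))"
    by (subst one_step[OF T inv_alg]) simp
  also have "\<dots> = ZZ T \<delta> v h"
    unfolding ZZ_def by (subst ennreal_mult[symmetric]) (auto simp: GG_pos[OF T, THEN less_imp_le])
  finally show ?thesis .
qed

lemma ZZ_expect:
  assumes T: "T \<ge> 1" "0 < \<delta>" "\<delta> < 1"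
  shows "(\<integral>\<^sup>+h. ZZ T \<delta> v h \<partial>measure_pmf (hist_pmf T \<delta> v C adv t)) = 1"
proof (induction t)
  case 0
  have "sp T v (init_state T) = 0"
    by (simp add: sp_def pend_def init_state_def goto_def start_phase_def)
  then show ?case by (simp add: ZZ_def NR_def alg_state_Nil GG_def)
next
  case (Suc t)
  show ?case
    by (simp add: Let_def ZZ_step[OF T] Suc)
qed


lemma supp:
  "h \<in> set_pmf (hist_pmf T \<delta> v C adv t) \<Longrightarrow>
     length h = t \<and> (\<forall>i<t. fst (h ! i) \<in> set_pmf (price_dist T \<delta> (alg_state T (take i h))))"
proof (induction t arbitrary: h)
  case 0 then show ?case by simp
next
  case (Suc t)
  from Suc.prems obtain h0 p where h0: "h0 \<in> set_pmf (hist_pmf T \<delta> v C adv t)"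
    and p: "p \<in> set_pmf (price_dist T \<delta> (alg_state T h0))"
    and h: "h = h0 @ [(p, (p \<le> v) \<noteq> (adv h0 (price_dist T \<delta> (alg_state T h0)) \<and> ncorr v h0 < C))]"
    by (auto simp: Let_def)
  from Suc.IH[OF h0] have IH: "length h0 = t"
    "\<forall>i<t. fst (h0 ! i) \<in> set_pmf (price_dist T \<delta> (alg_state T (take i h0)))" by auto
  show ?case
  proof (intro conjI allI impI)
    show "length h = Suc t" using h IH by simp
  next
    fix i assume "i < Suc t"
    then consider "i < t" | "i = t" by linarith
    then show "fst (h ! i) \<in> set_pmf (price_dist T \<delta> (alg_state T (take i h)))"
    proof cases
      case 1 then show ?thesis using IH h by (simp add: nth_append)
    next
      case 2 then show ?thesis using IH h p by (simp add: nth_append)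
    qed
  qed
qed

lemma pow_depth: assumes "T \<ge> 1" shows "real T \<le> 2 ^ depthD T"
proof -
  have l0: "log 2 (real T) \<ge> 0" using assms by simp
  then have c0: "\<lceil>log 2 (real T)\<rceil> \<ge> 0" by simp
  have "log 2 (real T) \<le> real (depthD T)" unfolding depthD_def
    using c0 le_of_int_ceiling[of "log 2 (real T)"] by simp
  then have "2 powr log 2 (real T) \<le> 2 powr real (depthD T)" by simp
  then show ?thesis using assms by (simp add: powr_realpow)
qed


lemma leaf_facts:
  assumes "T \<ge> 1" "0 \<le> v"
  shows "nodeL (leaf_of T v) \<le> v" "v - nodeL (leaf_of T v) \<le> 1 / real T" "v < nodeR (leaf_of T v)"
proof -
  define D where "D = depthD T"
  define x where "x = v * 2 ^ D"
  have x0: "x \<ge> 0" using assms by (simp add: x_def)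
  have k: "real (nat \<lfloor>x\<rfloor>) = of_int \<lfloor>x\<rfloor>" using x0 by simp
  have L: "nodeL (leaf_of T v) = of_int \<lfloor>x\<rfloor> / 2 ^ D"
    by (simp add: nodeL_def leaf_of_def D_def[symmetric] x_def[symmetric] k)
  have R: "nodeR (leaf_of T v) = (of_int \<lfloor>x\<rfloor> + 1) / 2 ^ D"
    by (simp add: nodeR_def leaf_of_def D_def[symmetric] x_def[symmetric] k)
  have v: "v = x / 2 ^ D" by (simp add: x_def)
  have f1: "of_int \<lfloor>x\<rfloor> \<le> x" "x < of_int \<lfloor>x\<rfloor> + 1" by linarith+
  have "of_int \<lfloor>x\<rfloor> / 2 ^ D \<le> x / 2 ^ D" using f1 by (simp add: divide_right_mono)
  then show "nodeL (leaf_of T v) \<le> v" using L v by simp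
  have "x / 2 ^ D < (of_int \<lfloor>x\<rfloor> + 1) / 2 ^ D" using f1 by (simp add: divide_strict_right_mono)
  then show "v < nodeR (leaf_of T v)" using R v by simp
  have "x / 2 ^ D - of_int \<lfloor>x\<rfloor> / 2 ^ D = (x - of_int \<lfloor>x\<rfloor>) / 2 ^ D" by (simp add: diff_divide_distrib)
  then have "v - nodeL (leaf_of T v) = (x - of_int \<lfloor>x\<rfloor>) / 2 ^ D" using L v by simp
  also
  have "\<dots> \<le> 1 / 2 ^ D" by (rule divide_right_mono) (use f1 in linarith, simp)
  also have "\<dots> \<le> 1 / real T" using pow_depth[OF assms(1)] assms(1) unfolding D_def
    by (simp add: frac_le)
  finally show "v - nodeL (leaf_of T v) \<le> 1 / real T" .
qed

lemma term_bound:
  assumes T: "T \<ge> 1" and v: "0 \<le> v" "v < 1"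
    and p: "p \<in> set_pmf (price_dist T \<delta> st)"
  shows "(if in_commit st (leaf_of T v) then v - (if p \<le> v then p else 0) else 0)
          \<le> 1 / real T + (if isR T v st p then 1 else 0)"
proof -
  let ?l = "leaf_of T v"
  note lf = leaf_facts[OF T v(1)]
  have Tp: "0 \<le> 1 / real T" by simp
  show ?thesis
  proof (cases "in_commit st ?l")
    case False then show ?thesis using Tp by simp
  next
    case True
    then have nd: "node st = ?l" and ph: "ph st = ComFirst \<or> ph st = ComSecond" by (auto simp: in_commit_def)
    have "p = nodeL ?l \<or> (p = nodeR ?l \<and> ph st = ComSecond)"
      using ph p by (auto simp: price_dist_def nd)
    then show ?thesis
    proof
      assume "p = nodeL ?l" then show ?thesis using lf True by simp
    next
      assume a: "p = nodeR ?l \<and> ph st = ComSecond"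
      then have "isR T v st p" using nd nodeL_neq_R[of ?l] by (auto simp: isR_def)
      then show ?thesis using a lf True v Tp by simp
    qed
  qed
qed

lemma regret_bound:
  assumes T: "T \<ge> 1" and v: "0 \<le> v" "v < 1"
    and h: "h \<in> set_pmf (hist_pmf T \<delta> v C adv T)"
  shows "leaf_regret T v (leaf_of T v) h \<le> 1 + real (NR T v h)"
proof -
  note S = supp[OF h]
  have "leaf_regret T v (leaf_of T v) h \<le> (\<Sum>i<T. 1 / real T + (if isR T v (alg_state T (take i h)) (fst (h ! i)) then 1 else 0))"
    unfolding leaf_regret_def S[THEN conjunct1] using S by (intro sum_mono term_bound[OF T v]) auto
  also have "\<dots> = (\<Sum>i<T. 1 / real T) + (\<Sum>i<T. (if isR T v (alg_state T (take i h)) (fst (h ! i)) then 1 else 0))"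
    by (rule sum.distrib)
  also have "(\<Sum>i<T. 1 / real T) = 1" using T by simp
  also have "(\<Sum>i<T. (if isR T v (alg_state T (take i h)) (fst (h ! i)) then 1 else 0)) = real (NR T v h)"
    unfolding NR_def of_nat_sum S[THEN conjunct1] by (intro sum.cong) auto
  finally show ?thesis .
qed


lemma E2:
  assumes T: "T \<ge> 1" "0 < \<delta>" "\<delta> < 1"
  shows "(\<integral>\<^sup>+h. ennreal (2 ^ NR T v h) \<partial>measure_pmf (hist_pmf T \<delta> v C adv T)) \<le> ennreal (GG T \<delta> T)"
proof -
  have "(\<integral>\<^sup>+h. ennreal (2 ^ NR T v h) \<partial>measure_pmf (hist_pmf T \<delta> v C adv T))
      \<le> (\<integral>\<^sup>+h. ennreal (GG T \<delta> T) * ZZ T \<delta> v h \<partial>measure_pmf (hist_pmf T \<delta> v C adv T))"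
  proof (rule nn_integral_mono_AE, unfold AE_measure_pmf_iff, intro ballI)
    fix h assume h: "h \<in> set_pmf (hist_pmf T \<delta> v C adv T)"
    let ?s = "sp T v (alg_state T h)"
    have "?s \<le> T" using cnt_alg[of T h "snd (leaf_of T v)"] supp[OF h] unfolding sp_def by auto
    then have g: "GG T \<delta> ?s \<le> GG T \<delta> T" by (rule GG_mono[OF T])
    have gp: "GG T \<delta> ?s > 0" by (rule GG_pos[OF T])
    have "(2::real) ^ NR T v h = GG T \<delta> ?s * (2 ^ NR T v h / GG T \<delta> ?s)" using gp by simp
    also have "\<dots> \<le> GG T \<delta> T * (2 ^ NR T v h / GG T \<delta> ?s)"
      using g gp by (intro mult_right_mono) auto
    finally have "(2::real) ^ NR T v h \<le> GG T \<delta> T * (2 ^ NR T v h / GG T \<delta> ?s)" .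
    then show "ennreal (2 ^ NR T v h) \<le> ennreal (GG T \<delta> T) * ZZ T \<delta> v h"
      unfolding ZZ_def using gp GG_pos[OF T, of T]
      by (subst ennreal_mult[symmetric]) (auto intro: ennreal_leI)
  qed
  also have "\<dots> = ennreal (GG T \<delta> T)"
    by (simp add: nn_integral_cmult ZZ_expect[OF T])
  finally show ?thesis .
qed

lemma markov_NR:
  assumes T: "T \<ge> 1" "0 < \<delta>" "\<delta> < 1"
  shows "measure_pmf.prob (hist_pmf T \<delta> v C adv T) {h. real (NR T v h) > a} \<le> GG T \<delta> T / 2 powr a"
proof -
  let ?M = "measure_pmf (hist_pmf T \<delta> v C adv T)"
  have "emeasure ?M {h. real (NR T v h) > a} = (\<integral>\<^sup>+h. indicator {h. real (NR T v h) > a} h \<partial>?M)"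
    by simp
  also have "\<dots> \<le> (\<integral>\<^sup>+h. ennreal (1 / 2 powr a) * ennreal (2 ^ NR T v h) \<partial>?M)"
  proof (rule nn_integral_mono)
    fix h
    show "indicator {h. real (NR T v h) > a} h \<le> ennreal (1 / 2 powr a) * ennreal (2 ^ NR T v h)"
    proof (cases "real (NR T v h) > a")
      case True
      have "2 powr a \<le> 2 powr real (NR T v h)" using True by simp
      also have "\<dots> = 2 ^ NR T v h" by (simp add: powr_realpow)
      finally have "1 \<le> 1 / 2 powr a * 2 ^ NR T v h" by (simp add: field_simps)
      then show ?thesis using True by (subst ennreal_mult[symmetric]) (auto simp: ennreal_1[symmetric] simp del: ennreal_1 intro: ennreal_leI)
    qed simp
  qed
  also have "\<dots> = ennreal (1 / 2 powr a) * (\<integral>\<^sup>+h. ennreal (2 ^ NR T v h) \<partial>?M)"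
    by (simp add: nn_integral_cmult)
  also have "\<dots> \<le> ennreal (1 / 2 powr a) * ennreal (GG T \<delta> T)"
    by (intro mult_left_mono E2[OF T]) auto
  also have "\<dots> = ennreal (GG T \<delta> T / 2 powr a)"
    using GG_pos[OF T, of T] by (simp add: ennreal_mult[symmetric])
  finally show ?thesis
    using GG_pos[OF T, of T] by (simp add: measure_pmf.emeasure_eq_measure)
qed


lemma harm_bd: "n \<ge> 1 \<Longrightarrow> (\<Sum>j\<in>{1..n}. 1 / real j) \<le> 1 + ln (real n)"
proof (induction n rule: dec_induct)
  case base then show ?case by simp
next
  case (step n)
  have n0: "real n > 0" using step by simp
  have "ln (real n / real (Suc n)) \<le> real n / real (Suc n) - 1" by (rule ln_le_minus_one) (use n0 in simp)
  also have "\<dots> = - (1 / real (Suc n))" by (simp add: field_simps)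
  finally have "1 / real (Suc n) \<le> ln (real (Suc n)) - ln (real n)"
    using n0 by (simp add: ln_div)
  then show ?case using step by (simp add: sum.cl_ivl_Suc)
qed

lemma GG_bound:
  assumes T: "T \<ge> 1" "0 < \<delta>" "\<delta> < 1" and n: "n \<ge> 1"
  shows "GG T \<delta> n \<le> exp (4 * ln (real T / \<delta>) * (1 + ln (real n)))"
proof -
  define L where "L = ln (real T / \<delta>)"
  have L0: "L \<ge> 0" using T by (simp add: L_def field_simps)
  have "GG T \<delta> n \<le> (\<Prod>j\<in>{1..n}. exp (commit_prob T \<delta> j))"
    unfolding GG_def
    by (intro prod_mono) (use cp_nonneg[OF T] in \<open>auto simp: exp_ge_add_one_self add_nonneg_nonneg\<close>)
  also have "\<dots> = exp (\<Sum>j\<in>{1..n}. commit_prob T \<delta> j)" by (simp add: exp_sum)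
  also have "(\<Sum>j\<in>{1..n}. commit_prob T \<delta> j) \<le> (\<Sum>j\<in>{1..n}. 4 * L * (1 / real j))"
    by (intro sum_mono) (simp add: commit_prob_def L_def)
  also have "\<dots> = 4 * L * (\<Sum>j\<in>{1..n}. 1 / real j)" by (simp add: sum_distrib_left)
  also have "\<dots> \<le> 4 * L * (1 + ln (real n))"
    using harm_bd[OF n] L0 by (intro mult_left_mono) auto
  finally show ?thesis by (simp add: L_def)
qed

lemma numeric:
  assumes T: "T \<ge> 2" "0 < \<delta>" "\<delta> < 1"
  shows "exp (4 * ln (real T / \<delta>) * (1 + ln (real T))) / 2 powr (20 * ln (real T) * ln (real T / \<delta>)) \<le> \<delta> / 3"
proof -
  define L where "L = ln (real T / \<delta>)"
  define l where "l = ln (real T)"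
  have L0: "L \<ge> 0" using T by (simp add: L_def field_simps)
  have l2: "ln (2::real) \<ge> 2/3" by (rule ln2_ge_two_thirds)
  have lT: "l \<ge> ln 2" using T by (simp add: l_def)
  have "(28/3) * (2/3) \<le> (20 * ln 2 - 4) * l"
    using l2 lT by (intro mult_mono) auto
  then have key: "6 + 4 * l \<le> 20 * ln 2 * l" by (simp add: algebra_simps)
  have "4 * L * (1 + l) - 20 * l * L * ln 2 \<le> - 2 * L"
  proof -
    have "L * (6 + 4 * l) \<le> L * (20 * ln 2 * l)" using key L0 by (rule mult_left_mono)
    then show ?thesis by (simp add: algebra_simps)
  qed
  have "exp (4 * L * (1 + l)) / 2 powr (20 * l * L) = exp (4 * L * (1 + l) - 20 * l * L * ln 2)"
    by (simp add: powr_def exp_diff)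
  also have "\<dots> \<le> exp (- 2 * L)" using \<open>4 * L * (1 + l) - 20 * l * L * ln 2 \<le> - 2 * L\<close> by simp
  also have "exp (- 2 * L) = (\<delta> / real T) ^ 2"
  proof -
    have "exp (- 2 * L) = exp (- L) ^ 2" using exp_of_nat_mult[of 2 "- L"] by simp
    also have "exp (- L) = \<delta> / real T" using T by (simp add: L_def exp_minus)
    finally show ?thesis .
  qed
  also have "\<dots> \<le> \<delta> / 3"
  proof -
    have "real T \<ge> 2" using T by simp
    then have "real T ^ 2 \<ge> 2 ^ 2" by (intro power_mono) auto
    then have "real T ^ 2 \<ge> 4" by simp
    then have "\<delta> ^ 2 / real T ^ 2 \<le> \<delta> / 4"
      using T by (simp add: field_simps power2_eq_square)
    then show ?thesis using T by (simp add: power_divide)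
  qed
  finally show ?thesis by (simp add: L_def l_def)
qed


theorem lemma5p2:
  fixes T C :: nat and \<delta> v :: real and adv :: adversary
  assumes "T \<ge> 1" and "0 < \<delta>" and "\<delta> < 1" and "0 \<le> v" and "v < 1"
  shows "measure_pmf.prob (hist_pmf T \<delta> v C adv T)
           {h. leaf_regret T v (leaf_of T v) h \<le> 1 + 20 * ln (real T) * ln (real T / \<delta>)}
         \<ge> 1 - \<delta> / 3"
proof -
  note T = assms(1-3)
  let ?p = "hist_pmf T \<delta> v C adv T"
  define a where "a = 20 * ln (real T) * ln (real T / \<delta>)"
  have bad: "measure_pmf.prob ?p {h. real (NR T v h) > a} \<le> \<delta> / 3"
  proof (cases "T = 1")
    case True
    have "{h. real (NR T v h) > a} \<inter> set_pmf ?p = {}"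
    proof (intro equalityI subsetI)
      fix h assume h: "h \<in> {h. real (NR T v h) > a} \<inter> set_pmf ?p"
      then have "h \<in> set_pmf ?p" by blast
      then have "length h = T" using supp[of h T \<delta> v C adv T] by blast
      then have "length h = 1" using True by simp
      then have "NR T v h = 0"
        by (simp add: NR_def alg_state_Nil isR_def init_state_def goto_def start_phase_def)
      then show "h \<in> {}" using h True by (simp add: a_def)
    qed simp
    then have "measure_pmf.prob ?p {h. real (NR T v h) > a} = 0"
      using measure_Int_set_pmf[of ?p "{h. real (NR T v h) > a}"] by simp
    then show ?thesis using assms by simp
  next
    case False
    then have T2: "T \<ge> 2" using assms by simp
    have "measure_pmf.prob ?p {h. real (NR T v h) > a} \<le> GG T \<delta> T / 2 powr a"
      by (rule markov_NR[OF T])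
    also have "\<dots> \<le> exp (4 * ln (real T / \<delta>) * (1 + ln (real T))) / 2 powr a"
      by (intro divide_right_mono GG_bound[OF T]) (use assms in auto)
    also have "\<dots> \<le> \<delta> / 3" unfolding a_def by (rule numeric[OF T2 assms(2,3)])
    finally show ?thesis .
  qed
  have sub: "{h. real (NR T v h) \<le> a} \<inter> set_pmf ?p \<subseteq> {h. leaf_regret T v (leaf_of T v) h \<le> 1 + a}"
    using regret_bound[OF assms(1,4,5)] by fastforce
  have "measure_pmf.prob ?p {h. real (NR T v h) \<le> a} = measure_pmf.prob ?p ({h. real (NR T v h) \<le> a} \<inter> set_pmf ?p)"
    by (simp add: measure_Int_set_pmf)
  also have "\<dots> \<le> measure_pmf.prob ?p {h. leaf_regret T v (leaf_of T v) h \<le> 1 + a}"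
    using sub by (intro measure_pmf.finite_measure_mono) auto
  finally have 1: "measure_pmf.prob ?p {h. real (NR T v h) \<le> a} \<le> measure_pmf.prob ?p {h. leaf_regret T v (leaf_of T v) h \<le> 1 + a}" .
  have "{h. real (NR T v h) \<le> a} = UNIV - {h. real (NR T v h) > a}" by auto
  then have "measure_pmf.prob ?p {h. real (NR T v h) \<le> a} = 1 - measure_pmf.prob ?p {h. real (NR T v h) > a}"
    using measure_pmf.prob_compl[of "{h. real (NR T v h) > a}" ?p] by simp
  then show ?thesis using 1 bad by (simp add: a_def)
qed

end
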